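(* $\mathcal D=\Phi^{-1}(\mathbf 1)^+$, where $\Phi^{-1}(\mathbf 1)^+$ is the set of $p\times p$ diagonal matrices $D$ with $D_{ii}>0$ for all $i$ and $\Phi\big((D_{ii})_{i=1}^p\big)=\mathbf 1\in\mathbb{R}^q$.
   Context: Let $\mathcal G=(V,E)$ be a finite directed acyclic graph. Input neurons $N_{\mathrm{in}}$ have no incoming edges, output neurons $N_{\mathrm{out}}$ no outgoing edges, hidden neurons $\mathcal H=V\setminus(N_{\mathrm{in}}\cup N_{\mathrm{out}})$. The parameter vector $\theta\in\mathbb{R}^p$ consists of one weight $\theta_{u\to v}$ per edge $(u,v)\in E$ and one bias $b_v$ per non-input neuron $v$. For $v\in\mathcal H$, $\mathrm{in}_v$ is the set of indices of $b_v$ and of the weights $\theta_{u\to v}$, and $\mathrm{out}_v$ the set of indices of the weights $\theta_{v\to u}$. For $v\in\mathcal H$, $\lambda>0$, $D_{\lambda,v}$ is the diagonal $p\times p$ matrix with entry $\lambda$ on $\mathrm{in}_v$, $1/\lambda$ on $\mathrm{out}_v$, $1$ elsewhere; $\mathcal D$ is the group generated by all $D_{\lambda,v}$. A path is a sequence of neurons $v_0\to\cdots\to v_d$ ($d\ge0$) whose consecutive pairs are edges, with $v_d\in N_{\mathrm{out}}$ (for $d=0$, $v_0\notin N_{\mathrm{in}}$); $\mathrm P$ is the set of paths, $q=|\mathrm P|$. The path-lifting $\Phi:\mathbb{R}^p\to\mathbb{R}^q$ is $\Phi_{\mathrm p}(\theta)=\prod_{\ell=1}^d\theta_{v_{\ell-1}\to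 v_\ell}$ if $v_0\in N_{\mathrm{in}}$ and $\Phi_{\mathrm p}(\theta)=b_{v_0}\prod_{\ell=1}^d\theta_{v_{\ell-1}\to v_\ell}$ otherwise (empty product $=1$). For a diagonal matrix $D$, $\Phi(D)$ means $\Phi$ applied to the vector of its diagonal entries. *)

theory Defs
  imports Complex_Main
begin

text \<open>Indices of the parameter vector: one weight per edge, one bias per neuron.\<close>
datatype 'v pidx = Wt 'v 'v | Bs 'v

definition Nin :: "'v set \<Rightarrow> ('v \<times> 'v) set \<Rightarrow> 'v set" where
  "Nin V E = {v \<in> V. \<forall>u. (u, v) \<notin> E}"

definition Nout :: "'v set \<Rightarrow> ('v \<times> 'v) set \<Rightarrow> 'v set" where
  "Nout V E = {v \<in> V. \<forall>u. (v, u) \<notin> E}"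

definition hidden :: "'v set \<Rightarrow> ('v \<times> 'v) set \<Rightarrow> 'v set" where
  "hidden V E = V - (Nin V E \<union> Nout V E)"

text \<open>The index set of the parameter vector theta (of size p).\<close>
definition params :: "'v set \<Rightarrow> ('v \<times> 'v) set \<Rightarrow> 'v pidx set" where
  "params V E = {Wt u v | u v. (u, v) \<in> E} \<union> {Bs v | v. v \<in> V - Nin V E}"

definition in_idx :: "('v \<times> 'v) set \<Rightarrow> 'v \<Rightarrow> 'v pidx set" where
  "in_idx E v = {Bs v} \<union> {Wt u v | u. (u, v) \<in> E}"

definition out_idx :: "('v \<times> 'v) set \<Rightarrow> 'v \<Rightarrow> 'v pidx set" where
  "out_idx E v = {Wt v u | u. (v, u) \<in> E}"

text \<open>Diagonal p x p matrices are represented by their diagonal, a function on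
  parameter indices (value 1 off the parameter index set).  D_{lambda,v}:\<close>
definition resc :: "('v \<times> 'v) set \<Rightarrow> real \<Rightarrow> 'v \<Rightarrow> 'v pidx \<Rightarrow> real" where
  "resc E lam v = (\<lambda>i. if i \<in> in_idx E v then lam
                        else if i \<in> out_idx E v then 1 / lam else 1)"

inductive_set rescaling_group :: "'v set \<Rightarrow> ('v \<times> 'v) set \<Rightarrow> ('v pidx \<Rightarrow> real) set"
  for V E where
  gen: "v \<in> hidden V E \<Longrightarrow> lam > 0 \<Longrightarrow> resc E lam v \<in> rescaling_group V E"
| one: "(\<lambda>_. 1) \<in> rescaling_group V E"
| mult: "d \<in> rescaling_group V E \<Longrightarrow> d' \<in> rescaling_group V E
          \<Longrightarrow> (\<lambda>i. d i * d' i) \<in> rescaling_group V E"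
| inv: "d \<in> rescaling_group V E \<Longrightarrow> (\<lambda>i. inverse (d i)) \<in> rescaling_group V E"

definition paths :: "'v set \<Rightarrow> ('v \<times> 'v) set \<Rightarrow> 'v list set" where
  "paths V E = {vs. vs \<noteq> [] \<and> set vs \<subseteq> V
      \<and> (\<forall>i. Suc i < length vs \<longrightarrow> (vs ! i, vs ! Suc i) \<in> E)
      \<and> last vs \<in> Nout V E
      \<and> (length vs = 1 \<longrightarrow> hd vs \<notin> Nin V E)}"

definition path_lift :: "'v set \<Rightarrow> ('v \<times> 'v) set \<Rightarrow> ('v pidx \<Rightarrow> real) \<Rightarrow> 'v list \<Rightarrow> real" where
  "path_lift V E \<theta> vs =
     (if hd vs \<in> Nin V E then 1 else \<theta> (Bs (hd vs)))
     * (\<Prod>i<length vs - 1. \<theta> (Wt (vs ! i) (vs ! Suc i)))"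

definition pos_fiber_one :: "'v set \<Rightarrow> ('v \<times> 'v) set \<Rightarrow> ('v pidx \<Rightarrow> real) set" where
  "pos_fiber_one V E = {d. (\<forall>i \<in> params V E. d i > 0)
      \<and> (\<forall>i. i \<notin> params V E \<longrightarrow> d i = 1)
      \<and> (\<forall>vs \<in> paths V E. path_lift V E d vs = 1)}"

end

theory Submission
  imports Defs
begin

definition Dg :: "'v set \<Rightarrow> ('v \<times> 'v) set \<Rightarrow> ('v \<Rightarrow> real) \<Rightarrow> 'v pidx \<Rightarrow> real" where
  "Dg V E g i = (if i \<in> params V E then (case i of Bs v \<Rightarrow> g v | Wt u v \<Rightarrow> g v / g u) else 1)"

lemma no_self_loop: "acyclic E \<Longrightarrow> (v, v) \<notin> E"
  unfolding acyclic_def by blast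

lemma resc_Dg:
  assumes "v \<in> hidden V E" "acyclic E"
  shows "resc E lam v = Dg V E (\<lambda>w. if w = v then lam else 1)"
proof
  fix i show "resc E lam v i = Dg V E (\<lambda>w. if w = v then lam else 1) i"
  proof (cases i)
    case (Wt a b)
    then show ?thesis using no_self_loop[OF assms(2)]
      by (auto simp: resc_def Dg_def in_idx_def out_idx_def params_def)
  next
    case (Bs w)
    then show ?thesis using assms(1)
      by (auto simp: resc_def Dg_def in_idx_def out_idx_def params_def hidden_def)
  qed
qed

lemma Dg_mult: "Dg V E (\<lambda>w. g1 w * g2 w) = (\<lambda>i. Dg V E g1 i * Dg V E g2 i)"
  by (rule ext) (auto simp: Dg_def split: pidx.splits)

lemma Dg_inv: "Dg V E (\<lambda>w. inverse (g w)) = (\<lambda>i. inverse (Dg V E g i))"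
  by (rule ext) (auto simp: Dg_def field_simps split: pidx.splits)

lemma Dg_one: "Dg V E (\<lambda>w. 1) = (\<lambda>i. 1)"
  by (rule ext) (auto simp: Dg_def split: pidx.splits)

definition goodg where
  "goodg V E g \<longleftrightarrow> (\<forall>w. g w > 0) \<and> (\<forall>w. w \<notin> hidden V E \<longrightarrow> g w = 1)"

lemma group_Dg:
  assumes "acyclic E" "d \<in> rescaling_group V E"
  shows "\<exists>g. goodg V E g \<and> d = Dg V E g"
  using assms(2)
proof induction
  case (gen v lam)
  then show ?case using resc_Dg[OF gen(1) assms(1)]
    by (intro exI[of _ "\<lambda>w. if w = v then lam else 1"]) (auto simp: goodg_def)
next
  case one
  show ?case
    by (intro exI[of _ "\<lambda>w. 1"]) (auto simp: goodg_def Dg_one)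
next
  case (mult d d')
  then obtain g g' where "goodg V E g" "d = Dg V E g" "goodg V E g'" "d' = Dg V E g'" by blast
  then show ?case
    by (intro exI[of _ "\<lambda>w. g w * g' w"]) (auto simp: goodg_def Dg_mult)
next
  case (inv d)
  then obtain g where "goodg V E g" "d = Dg V E g" by blast
  then show ?case
    by (intro exI[of _ "\<lambda>w. inverse (g w)"]) (auto simp: goodg_def Dg_inv)
qed

lemma telescope:
  assumes "\<And>i. (g (x i) :: real) \<noteq> 0"
  shows "(\<Prod>i<n. g (x (Suc i)) / g (x i)) = g (x n) / g (x 0)"
  using assms by (induction n) (auto simp: field_simps)

lemma Dg_fiber:
  assumes "goodg V E g"
  shows "Dg V E g \<in> pos_fiber_one V E"
  unfolding pos_fiber_one_def
proof (intro CollectI conjI ballI allI impI)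
  fix i assume "i \<in> params V E"
  then show "Dg V E g i > 0" using assms by (auto simp: Dg_def goodg_def split: pidx.splits)
next
  fix i assume "i \<notin> params V E"
  then show "Dg V E g i = 1" by (simp add: Dg_def)
next
  fix vs assume vs: "vs \<in> paths V E"
  have gnz: "\<And>w. g w \<noteq> 0" using assms unfolding goodg_def by (metis less_irrefl)
  have "(\<Prod>i<length vs - 1. Dg V E g (Wt (vs ! i) (vs ! Suc i)))
      = (\<Prod>i<length vs - 1. g (vs ! Suc i) / g (vs ! i))"
  proof (rule prod.cong)
    fix i assume "i \<in> {..<length vs - 1}"
    then have "(vs ! i, vs ! Suc i) \<in> E" using vs by (auto simp: paths_def)
    then show "Dg V E g (Wt (vs ! i) (vs ! Suc i)) = g (vs ! Suc i) / g (vs ! i)"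
      by (auto simp: Dg_def params_def)
  qed simp
  also have "\<dots> = g (vs ! (length vs - 1)) / g (vs ! 0)"
    using telescope[of g "\<lambda>i. vs ! i" "length vs - 1"] gnz by simp
  also have "\<dots> = 1 / g (hd vs)"
  proof -
    have "vs \<noteq> []" "last vs \<in> Nout V E" using vs by (auto simp: paths_def)
    then have "g (vs ! (length vs - 1)) = 1" using assms
      by (auto simp: goodg_def hidden_def last_conv_nth)
    then show ?thesis using \<open>vs \<noteq> []\<close> by (simp add: hd_conv_nth)
  qed
  finally have P: "(\<Prod>i<length vs - 1. Dg V E g (Wt (vs ! i) (vs ! Suc i))) = 1 / g (hd vs)" .
  have "(if hd vs \<in> Nin V E then 1 else Dg V E g (Bs (hd vs))) = g (hd vs)"
  proof -
    have "vs \<noteq> []" "set vs \<subseteq> V" using vs by (auto simp: paths_def)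
    then have "hd vs \<in> V" by auto
    then show ?thesis using assms by (auto simp: Dg_def params_def goodg_def hidden_def)
  qed
  then show "path_lift V E (Dg V E g) vs = 1"
    unfolding path_lift_def P using gnz by simp
qed


lemma group_prod:
  assumes "finite F" "F \<subseteq> hidden V E" "\<forall>w. g w > 0" "acyclic E"
  shows "Dg V E (\<lambda>w. if w \<in> F then g w else 1) \<in> rescaling_group V E"
  using assms(1,2)
proof (induction F rule: finite_induct)
  case empty
  then show ?case by (simp add: Dg_one rescaling_group.one)
next
  case (insert x F)
  have eq: "(\<lambda>w. if w \<in> insert x F then g w else 1)
      = (\<lambda>w. (if w \<in> F then g w else 1) * (if w = x then g x else 1))"
    using insert(2) by auto
  have "x \<in> hidden V E" using insert by auto
  then have "resc E (g x) x \<in> rescaling_group V E"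
    using assms(3) by (intro rescaling_group.gen) auto
  then have "Dg V E (\<lambda>w. if w = x then g x else 1) \<in> rescaling_group V E"
    using resc_Dg[OF \<open>x \<in> hidden V E\<close> assms(4)] by simp
  then show ?case unfolding eq Dg_mult using insert
    by (intro rescaling_group.mult) auto
qed

lemma path_exists:
  assumes "finite E" "acyclic E" "E \<subseteq> V \<times> V" "v \<in> V"
  shows "\<exists>ws. ws \<noteq> [] \<and> hd ws = v \<and> set ws \<subseteq> V
     \<and> (\<forall>i. Suc i < length ws \<longrightarrow> (ws ! i, ws ! Suc i) \<in> E) \<and> last ws \<in> Nout V E"
  using assms(4)
proof (induction v rule: wf_induct_rule[OF finite_acyclic_wf_converse[OF assms(1,2)]])
  case (1 v)
  show ?case
  proof (cases "v \<in> Nout V E")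
    case True
    then show ?thesis using 1(2) by (intro exI[of _ "[v]"]) auto
  next
    case False
    then obtain w where vw: "(v, w) \<in> E" using 1(2) by (auto simp: Nout_def)
    then have "w \<in> V" using assms(3) by auto
    from 1(1)[of w] vw \<open>w \<in> V\<close> obtain ws where ws: "ws \<noteq> []" "hd ws = w" "set ws \<subseteq> V"
      "\<forall>i. Suc i < length ws \<longrightarrow> (ws ! i, ws ! Suc i) \<in> E" "last ws \<in> Nout V E" by auto
    have "\<forall>i. Suc i < length (v # ws) \<longrightarrow> ((v # ws) ! i, (v # ws) ! Suc i) \<in> E"
    proof (intro allI impI)
      fix i assume "Suc i < length (v # ws)"
      then show "((v # ws) ! i, (v # ws) ! Suc i) \<in> E"
        using ws vw by (cases i) (auto simp: hd_conv_nth)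
    qed
    then show ?thesis using ws 1(2) by (intro exI[of _ "v # ws"]) auto
  qed
qed

lemma fiber_Dg:
  assumes "finite V" "E \<subseteq> V \<times> V" "acyclic E" "d \<in> pos_fiber_one V E"
  defines "g \<equiv> (\<lambda>w. if w \<in> hidden V E then d (Bs w) else 1)"
  shows "d = Dg V E g" and "\<forall>w. g w > 0"
proof -
  have finE: "finite E" using assms(1,2) finite_subset by (metis finite_SigmaI)
  have dpos: "\<And>i. i \<in> params V E \<Longrightarrow> d i > 0"
    and d1: "\<And>i. i \<notin> params V E \<Longrightarrow> d i = 1"
    and dP: "\<And>vs. vs \<in> paths V E \<Longrightarrow> path_lift V E d vs = 1"
    using assms(4) by (auto simp: pos_fiber_one_def)
  show gpos: "\<forall>w. g w > 0"
    unfolding g_def using dpos by (auto simp: hidden_def params_def)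
  have B: "d (Bs w) = g w" if "w \<in> V" "w \<notin> Nin V E" for w
  proof (cases "w \<in> hidden V E")
    case True then show ?thesis by (simp add: g_def)
  next
    case False
    then have "w \<in> Nout V E" using that by (auto simp: hidden_def)
    then have "[w] \<in> paths V E" using that by (auto simp: paths_def)
    then have "path_lift V E d [w] = 1" by (rule dP)
    then show ?thesis using False that by (simp add: path_lift_def g_def)
  qed
  have W: "d (Wt u v) = g v / g u" if uv: "(u, v) \<in> E" for u v
  proof -
    have "v \<in> V" "u \<in> V" using uv assms(2) by auto
    have vnin: "v \<notin> Nin V E" using uv by (auto simp: Nin_def)
    have unout: "u \<notin> Nout V E" using uv by (auto simp: Nout_def)
    obtain ws where ws: "ws \<noteq> []" "hd ws = v" "set ws \<subseteq> V"
      "\<forall>i. Suc i < length ws \<longrightarrow> (ws ! i, ws ! Suc i) \<in> E" "last ws \<in> Nout V E"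
      using path_exists[OF finE assms(3,2) \<open>v \<in> V\<close>] by blast
    define P where "P = (\<Prod>i<length ws - 1. d (Wt (ws ! i) (ws ! Suc i)))"
    have "ws \<in> paths V E" using ws vnin by (auto simp: paths_def)
    then have "path_lift V E d ws = 1" by (rule dP)
    then have e1: "g v * P = 1" using vnin ws B[OF \<open>v \<in> V\<close> vnin]
      by (simp add: path_lift_def P_def)
    have "u # ws \<in> paths V E"
    proof -
      have "\<forall>i. Suc i < length (u # ws) \<longrightarrow> ((u # ws) ! i, (u # ws) ! Suc i) \<in> E"
      proof (intro allI impI)
        fix i assume "Suc i < length (u # ws)"
        then show "((u # ws) ! i, (u # ws) ! Suc i) \<in> E"
          using ws uv by (cases i) (auto simp: hd_conv_nth)
      qed
      then show ?thesis using ws \<open>u \<in> V\<close> by (auto simp: paths_def)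
    qed
    then have "path_lift V E d (u # ws) = 1" by (rule dP)
    moreover have "(\<Prod>i<length (u # ws) - 1. d (Wt ((u # ws) ! i) ((u # ws) ! Suc i)))
        = d (Wt u v) * P"
    proof -
      have len: "length (u # ws) - 1 = Suc (length ws - 1)" using ws by (cases ws) auto
      show ?thesis unfolding len prod.lessThan_Suc_shift P_def using ws
        by (simp add: hd_conv_nth)
    qed
    moreover have "(if u \<in> Nin V E then 1 else d (Bs u)) = g u"
      using B[OF \<open>u \<in> V\<close>] unout by (auto simp: g_def hidden_def)
    moreover have "path_lift V E d (u # ws) = (if u \<in> Nin V E then 1 else d (Bs u))
       * (\<Prod>i<length (u # ws) - 1. d (Wt ((u # ws) ! i) ((u # ws) ! Suc i)))"
      unfolding path_lift_def list.sel(1) ..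
    ultimately have e2: "g u * (d (Wt u v) * P) = 1"
      by simp
    have "g u > 0" "g v > 0" using gpos by auto
    then show ?thesis using e1 e2 by (simp add: field_simps) (metis mult.commute mult.left_commute mult_cancel_right1 e1 e2 mult.assoc)
  qed
  show "d = Dg V E g"
  proof
    fix i show "d i = Dg V E g i"
    proof (cases "i \<in> params V E")
      case False then show ?thesis using d1 by (simp add: Dg_def)
    next
      case True
      then show ?thesis
      proof (cases i)
        case (Wt a b)
        then show ?thesis using True W by (auto simp: Dg_def params_def)
      next
        case (Bs w)
        then show ?thesis using True B by (auto simp: Dg_def params_def)
      qed
    qed
  qed
qed

theorem lemmaD7:
  fixes V :: "'v set" and E :: "('v \<times> 'v) set"
  assumes "finite V" and "E \<subseteq> V \<times> V" and "acyclic E"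
  shows "rescaling_group V E = pos_fiber_one V E"
proof
  show "rescaling_group V E \<subseteq> pos_fiber_one V E"
  proof
    fix d assume "d \<in> rescaling_group V E"
    then obtain g where "goodg V E g" "d = Dg V E g" using group_Dg[OF assms(3)] by blast
    then show "d \<in> pos_fiber_one V E" using Dg_fiber by simp
  qed
next
  show "pos_fiber_one V E \<subseteq> rescaling_group V E"
  proof
    fix d assume d: "d \<in> pos_fiber_one V E"
    define g where "g = (\<lambda>w. if w \<in> hidden V E then d (Bs w) else 1)"
    have "d = Dg V E g" "\<forall>w. g w > 0" using fiber_Dg[OF assms d] unfolding g_def by auto
    have fH: "finite (hidden V E)" using assms(1) by (simp add: hidden_def)
    have "(\<lambda>w. if w \<in> hidden V E then g w else 1) = g" by (auto simp: g_def)
    then show "d \<in> rescaling_group V E"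
      using group_prod[OF fH order_refl \<open>\<forall>w. g w > 0\<close> assms(3)] \<open>d = Dg V E g\<close> by simp
  qed
qed

end
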